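(* Let $\Sigma$ be the ensemble system $$\frac{d}{dt}x(t,\beta)=F(x(t,\beta),\beta,u(t)),\qquad Y_t=h(x_t(\Omega)),\qquad \beta\in\Omega,$$ with state space $\mathcal{F}(\Omega,M)$, output function $h:M\to N$ and output measures $\mu_t=(h\circ x_t)_\#\lambda\in\mathcal{P}(N)$. Equip $\mathcal{F}(\Omega,M)$ with the metric $$d_F(f_1,f_2)=\int_\Omega \frac{\rho(f_1(\beta),f_2(\beta))}{1+\rho(f_1(\beta),f_2(\beta))}\,d\lambda(\beta),$$ where $\rho$ is the Riemannian distance on $M$. Equip $\mathcal{P}(N)$ with a metric $d_P$ metrizing the weak topology. Assume that $\Sigma$ is ensemble controllable on $(\mathcal{F}(\Omega,M),d_F)$ and that $h:M\to N$ is continuous and surjective. Then $\Sigma$ is pattern controllable on $(\mathcal{P}(N),d_P)$.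
   Context: Standing setup. - $\Omega\subset\mathbb{R}^d$ is compact, and $\lambda$ is an atomless Borel probability measure on $\Omega$. - $M$ is a Riemannian manifold and $N$ is a Polish metric space. - Controls are measurable functions $u:[0,T]\to\mathbb{R}^p$, and the same control is applied to every $\beta\in\Omega$. - $\mathcal{F}(\Omega,M)$ denotes the space of Borel measurable maps $\Omega\to M$. For each $t$, $x_t=x(t,\cdot)\in\mathcal{F}(\Omega,M)$. - $\mathcal{P}(N)$ denotes the space of Borel probability measures on $N$. The output measure at time $t$ is the pushforward $\mu_t=(y_t)_\#\lambda$, where $y_t(\beta)=h(x_t(\beta))$; that is, $\mu_t(B)=\lambda(y_t^{-1}(B))$ for Borel $B\subseteq N$. Ensemble controllability on $\mathcal{F}(\Omega,M)$ with respect to a metric $d_F$: for every initial state $x_0\in\mathcal{F}(\Omega,M)$, every target $x_F\in\mathcal{F}(\Omega,M)$ and every $\varepsilon>0$, there exist a finite time $T>0$ and a measurable control $u$ such that the solution satisfies $d_F(x_T,x_F)<\varepsilon$. Pattern controllability on $\mathcal{P}(N)$ with respect to $d_P$: for every initial state (inducing the initial output measure $\mu_0$), every target $\mu_F\in\mathcal{P}(N)$ and every $\varepsilon>0$, there exist a finite $T>0$ and a measurable control $u$ such that $d_P(\mu_T,\mu_F)<\varepsilon$. *)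

theory Defs
  imports "HOL-Probability.Probability"
begin

definition prob_measures :: "'n::topological_space measure set" where
  "prob_measures = {\<mu>. prob_space \<mu> \<and> sets \<mu> = sets borel}"

definition weak_topology :: "'n::topological_space measure topology" where
  "weak_topology = topology_generated_by
     {{\<mu> \<in> prob_measures. (\<integral>y. (f::'n \<Rightarrow> real) y \<partial>\<mu>) \<in> U} | f U.
        continuous_on UNIV f \<and> bounded (range f) \<and> open U}"

definition metrizes_weak_topology :: "('n::topological_space measure \<Rightarrow> 'n measure \<Rightarrow> real) \<Rightarrow> bool" where
  "metrizes_weak_topology dP \<longleftrightarrow>
     Metric_space prob_measures dP \<and> Metric_space.mtopology prob_measures dP = weak_topology"

definition dF :: "'a measure \<Rightarrow> ('a \<Rightarrow> 'm::metric_space) \<Rightarrow> ('a \<Rightarrow> 'm) \<Rightarrow> real" where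
  "dF lam f1 f2 = (\<integral>\<beta>. dist (f1 \<beta>) (f2 \<beta>) / (1 + dist (f1 \<beta>) (f2 \<beta>)) \<partial>lam)"

text \<open>The ensemble system is given abstractly by its solution relation:
  Sys T u x0 xT means that the solution of the system with control u starting at
  the ensemble state x0 is equal to xT at time T.\<close>

definition ensemble_controllable ::
  "'a measure \<Rightarrow> (real \<Rightarrow> (real \<Rightarrow> 'p::euclidean_space) \<Rightarrow> ('a \<Rightarrow> 'm::metric_space) \<Rightarrow> ('a \<Rightarrow> 'm) \<Rightarrow> bool) \<Rightarrow> bool" where
  "ensemble_controllable lam Sys \<longleftrightarrow>
     (\<forall>x0 \<in> borel_measurable lam. \<forall>xF \<in> borel_measurable lam. \<forall>\<epsilon>>0.
        \<exists>T>0. \<exists>u \<in> borel_measurable borel. \<exists>xT. Sys T u x0 xT \<and> dF lam xT xF < \<epsilon>)"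

definition pattern_controllable ::
  "'a measure \<Rightarrow> (real \<Rightarrow> (real \<Rightarrow> 'p::euclidean_space) \<Rightarrow> ('a \<Rightarrow> 'm::metric_space) \<Rightarrow> ('a \<Rightarrow> 'm) \<Rightarrow> bool)
     \<Rightarrow> ('m \<Rightarrow> 'n::topological_space) \<Rightarrow> ('n measure \<Rightarrow> 'n measure \<Rightarrow> real) \<Rightarrow> bool" where
  "pattern_controllable lam Sys h dP \<longleftrightarrow>
     (\<forall>x0 \<in> borel_measurable lam. \<forall>\<mu>F \<in> prob_measures. \<forall>\<epsilon>>0.
        \<exists>T>0. \<exists>u \<in> borel_measurable borel. \<exists>xT. Sys T u x0 xT \<and>
          dP (distr lam borel (h \<circ> xT)) \<mu>F < \<epsilon>)"

end

theory Submission
  imports Defs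
begin

definition nbhd_prop :: "'n::topological_space measure set \<Rightarrow> bool" where
 "nbhd_prop W \<longleftrightarrow> (\<forall>\<nu>\<in>W. \<exists>Fs \<eta>. finite Fs \<and> \<eta> > 0 \<and>
     (\<forall>g\<in>Fs. continuous_on UNIV (g::'n\<Rightarrow>real) \<and> bounded (range g)) \<and>
     (\<forall>\<mu>\<in>prob_measures. (\<forall>g\<in>Fs. \<bar>(\<integral>y. g y \<partial>\<mu>) - (\<integral>y. g y \<partial>\<nu>)\<bar> < \<eta>) \<longrightarrow> \<mu> \<in> W))"

lemma nbhd_propD:
  assumes "nbhd_prop W" "\<nu> \<in> W"
  obtains Fs \<eta> where "finite Fs" "\<eta> > 0" "\<forall>g\<in>Fs. continuous_on UNIV (g::'n::topological_space\<Rightarrow>real) \<and> bounded (range g)"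
     "\<forall>\<mu>\<in>prob_measures. (\<forall>g\<in>Fs. \<bar>(\<integral>y. g y \<partial>\<mu>) - (\<integral>y. g y \<partial>\<nu>)\<bar> < \<eta>) \<longrightarrow> \<mu> \<in> W"
proof -
  have "\<exists>Fs \<eta>. finite Fs \<and> \<eta> > 0 \<and>
     (\<forall>g\<in>Fs. continuous_on UNIV (g::'n\<Rightarrow>real) \<and> bounded (range g)) \<and>
     (\<forall>\<mu>\<in>prob_measures. (\<forall>g\<in>Fs. \<bar>(\<integral>y. g y \<partial>\<mu>) - (\<integral>y. g y \<partial>\<nu>)\<bar> < \<eta>) \<longrightarrow> \<mu> \<in> W)"
    using assms unfolding nbhd_prop_def by (rule bspec)
  then show ?thesis using that by (elim exE conjE) 
qed

lemma generate_nbhd: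
  assumes "generate_topology_on
     {{\<mu> \<in> prob_measures. (\<integral>y. (f::'n::topological_space \<Rightarrow> real) y \<partial>\<mu>) \<in> U} | f U.
        continuous_on UNIV f \<and> bounded (range f) \<and> open U}  W"
  shows "nbhd_prop W"
  using assms
proof induction
  case Empty
  then show ?case by (simp add: nbhd_prop_def)
next
  case (Int a b)
  show ?case unfolding nbhd_prop_def
  proof
    fix \<nu> assume "\<nu> \<in> a \<inter> b"
    then have nab: "\<nu> \<in> a" "\<nu> \<in> b" by auto
    obtain F1 e1 where 1: "finite F1" "e1 > 0" "\<forall>g\<in>F1. continuous_on UNIV (g::'n\<Rightarrow>real) \<and> bounded (range g)"
     "\<forall>\<mu>\<in>prob_measures. (\<forall>g\<in>F1. \<bar>(\<integral>y. g y \<partial>\<mu>) - (\<integral>y. g y \<partial>\<nu>)\<bar> < e1) \<longrightarrow> \<mu> \<in> a"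
      using Int.IH(1) nab(1) by (rule nbhd_propD)
    obtain F2 e2 where 2: "finite F2" "e2 > 0" "\<forall>g\<in>F2. continuous_on UNIV (g::'n\<Rightarrow>real) \<and> bounded (range g)"
     "\<forall>\<mu>\<in>prob_measures. (\<forall>g\<in>F2. \<bar>(\<integral>y. g y \<partial>\<mu>) - (\<integral>y. g y \<partial>\<nu>)\<bar> < e2) \<longrightarrow> \<mu> \<in> b"
      using Int.IH(2) nab(2) by (rule nbhd_propD)
    have H: "\<forall>\<mu>\<in>prob_measures. (\<forall>g\<in>F1 \<union> F2. \<bar>(\<integral>y. g y \<partial>\<mu>) - (\<integral>y. g y \<partial>\<nu>)\<bar> < min e1 e2) \<longrightarrow> \<mu> \<in> a \<inter> b"
    proof (intro ballI impI)
      fix \<mu> assume m: "\<mu> \<in> prob_measures" "\<forall>g\<in>F1 \<union> F2. \<bar>(\<integral>y. g y \<partial>\<mu>) - (\<integral>y. g y \<partial>\<nu>)\<bar> < min e1 e2"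
      have "\<forall>g\<in>F1. \<bar>(\<integral>y. g y \<partial>\<mu>) - (\<integral>y. g y \<partial>\<nu>)\<bar> < e1"
      proof
        fix g assume "g \<in> F1"
        then have "\<bar>(\<integral>y. g y \<partial>\<mu>) - (\<integral>y. g y \<partial>\<nu>)\<bar> < min e1 e2" using m(2) by blast
        then show "\<bar>(\<integral>y. g y \<partial>\<mu>) - (\<integral>y. g y \<partial>\<nu>)\<bar> < e1" by linarith
      qed
      then have "\<mu> \<in> a" using 1(4) m(1) by blast
      have "\<forall>g\<in>F2. \<bar>(\<integral>y. g y \<partial>\<mu>) - (\<integral>y. g y \<partial>\<nu>)\<bar> < e2"
      proof
        fix g assume "g \<in> F2"
        then have "\<bar>(\<integral>y. g y \<partial>\<mu>) - (\<integral>y. g y \<partial>\<nu>)\<bar> < min e1 e2" using m(2) by blast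
        then show "\<bar>(\<integral>y. g y \<partial>\<mu>) - (\<integral>y. g y \<partial>\<nu>)\<bar> < e2" by linarith
      qed
      then have "\<mu> \<in> b" using 2(4) m(1) by blast
      then show "\<mu> \<in> a \<inter> b" using \<open>\<mu> \<in> a\<close> by blast
    qed
    have F: "finite (F1 \<union> F2)" "min e1 e2 > 0" using 1(1,2) 2(1,2) by auto
    have C: "\<forall>g\<in>F1 \<union> F2. continuous_on UNIV (g::'n\<Rightarrow>real) \<and> bounded (range g)" using 1(3) 2(3) by blast
    show "\<exists>Fs \<eta>. finite Fs \<and> \<eta> > 0 \<and>
     (\<forall>g\<in>Fs. continuous_on UNIV (g::'n\<Rightarrow>real) \<and> bounded (range g)) \<and>
     (\<forall>\<mu>\<in>prob_measures. (\<forall>g\<in>Fs. \<bar>(\<integral>y. g y \<partial>\<mu>) - (\<integral>y. g y \<partial>\<nu>)\<bar> < \<eta>) \<longrightarrow> \<mu> \<in> a \<inter> b)"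
      using F C H by blast
  qed
next
  case (UN K)
  show ?case unfolding nbhd_prop_def
  proof
    fix \<nu> assume "\<nu> \<in> \<Union>K"
    then obtain k where k: "k \<in> K" "\<nu> \<in> k" by blast
    have "nbhd_prop k" using UN.IH[OF k(1)] .
    then obtain Fs \<eta> where F: "finite Fs" "\<eta> > 0" "\<forall>g\<in>Fs. continuous_on UNIV (g::'n\<Rightarrow>real) \<and> bounded (range g)"
     and H0: "\<forall>\<mu>\<in>prob_measures. (\<forall>g\<in>Fs. \<bar>(\<integral>y. g y \<partial>\<mu>) - (\<integral>y. g y \<partial>\<nu>)\<bar> < \<eta>) \<longrightarrow> \<mu> \<in> k"
      using k(2) by (rule nbhd_propD)
    have H: "\<forall>\<mu>\<in>prob_measures. (\<forall>g\<in>Fs. \<bar>(\<integral>y. g y \<partial>\<mu>) - (\<integral>y. g y \<partial>\<nu>)\<bar> < \<eta>) \<longrightarrow> \<mu> \<in> \<Union>K"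
    proof (intro ballI impI)
      fix \<mu> assume "\<mu> \<in> prob_measures" "\<forall>g\<in>Fs. \<bar>(\<integral>y. g y \<partial>\<mu>) - (\<integral>y. g y \<partial>\<nu>)\<bar> < \<eta>"
      then have "\<mu> \<in> k" using H0 by blast
      then show "\<mu> \<in> \<Union>K" using k(1) by blast
    qed
    show "\<exists>Fs \<eta>. finite Fs \<and> \<eta> > 0 \<and>
     (\<forall>g\<in>Fs. continuous_on UNIV (g::'n\<Rightarrow>real) \<and> bounded (range g)) \<and>
     (\<forall>\<mu>\<in>prob_measures. (\<forall>g\<in>Fs. \<bar>(\<integral>y. g y \<partial>\<mu>) - (\<integral>y. g y \<partial>\<nu>)\<bar> < \<eta>) \<longrightarrow> \<mu> \<in> \<Union>K)"
      using F H by blast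
  qed
next
  case (Basis s)
  have "\<exists>f U. s = {\<mu> \<in> prob_measures. (\<integral>y. (f::'n\<Rightarrow>real) y \<partial>\<mu>) \<in> U} \<and> continuous_on UNIV f \<and> bounded (range f) \<and> open U"
    using Basis unfolding mem_Collect_eq .
  then obtain f :: "'n \<Rightarrow> real" and U where s: "s = {\<mu> \<in> prob_measures. (\<integral>y. f y \<partial>\<mu>) \<in> U}"
    and f: "continuous_on UNIV f" "bounded (range f)" "open U" by (elim exE conjE)
  show ?case unfolding nbhd_prop_def
  proof
    fix \<nu> assume "\<nu> \<in> s"
    then have "(\<integral>y. f y \<partial>\<nu>) \<in> U" using s by simp
    then obtain e where e: "e > 0" "ball (\<integral>y. f y \<partial>\<nu>) e \<subseteq> U" using f(3) open_contains_ball by metis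
    have H: "\<forall>\<mu>\<in>prob_measures. (\<forall>g\<in>{f}. \<bar>(\<integral>y. g y \<partial>\<mu>) - (\<integral>y. g y \<partial>\<nu>)\<bar> < e) \<longrightarrow> \<mu> \<in> s"
    proof (intro ballI impI)
      fix \<mu> assume "\<mu> \<in> prob_measures" "\<forall>g\<in>{f}. \<bar>(\<integral>y. g y \<partial>\<mu>) - (\<integral>y. g y \<partial>\<nu>)\<bar> < e"
      then have "\<bar>(\<integral>y. f y \<partial>\<mu>) - (\<integral>y. f y \<partial>\<nu>)\<bar> < e" by simp
      then have "(\<integral>y. f y \<partial>\<mu>) \<in> ball (\<integral>y. f y \<partial>\<nu>) e" by (simp add: dist_real_def abs_minus_commute[of "\<integral>y. f y \<partial>\<nu>"])
      then have "(\<integral>y. f y \<partial>\<mu>) \<in> U" using e by blast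
      then show "\<mu> \<in> s" unfolding s using \<open>\<mu> \<in> prob_measures\<close> by simp
    qed
    have F: "finite {f}" "\<forall>g\<in>{f}. continuous_on UNIV (g::'n\<Rightarrow>real) \<and> bounded (range g)" using f by auto
    show "\<exists>Fs \<eta>. finite Fs \<and> \<eta> > 0 \<and>
     (\<forall>g\<in>Fs. continuous_on UNIV (g::'n\<Rightarrow>real) \<and> bounded (range g)) \<and>
     (\<forall>\<mu>\<in>prob_measures. (\<forall>g\<in>Fs. \<bar>(\<integral>y. g y \<partial>\<mu>) - (\<integral>y. g y \<partial>\<nu>)\<bar> < \<eta>) \<longrightarrow> \<mu> \<in> s)"
      using F H e(1) by blast
  qed
qed

lemma weak_nbhd:
  fixes dP :: "'n::topological_space measure \<Rightarrow> 'n measure \<Rightarrow> real"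
  assumes "metrizes_weak_topology dP" "\<mu>F \<in> prob_measures" "\<epsilon> > 0"
  obtains Fs \<eta> where "finite Fs" "\<eta> > 0"
     "\<forall>g\<in>Fs. continuous_on UNIV (g::'n\<Rightarrow>real) \<and> bounded (range g)"
     "\<forall>\<mu>\<in>prob_measures. (\<forall>g\<in>Fs. \<bar>(\<integral>y. g y \<partial>\<mu>) - (\<integral>y. g y \<partial>\<mu>F)\<bar> < \<eta>) \<longrightarrow> dP \<mu> \<mu>F < \<epsilon>"
proof -
  interpret Metric_space prob_measures dP using assms(1) unfolding metrizes_weak_topology_def by auto
  have "openin mtopology (mball \<mu>F \<epsilon>)" by simp
  then have "openin weak_topology (mball \<mu>F \<epsilon>)" using assms(1) unfolding metrizes_weak_topology_def by simp
  then have "nbhd_prop (mball \<mu>F \<epsilon>)" unfolding weak_topology_def openin_topology_generated_by_iff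
    by (rule generate_nbhd)
  moreover have "\<mu>F \<in> mball \<mu>F \<epsilon>" using assms by simp
  ultimately obtain Fs \<eta> where "finite Fs" "\<eta> > 0"
     "\<forall>g\<in>Fs. continuous_on UNIV (g::'n\<Rightarrow>real) \<and> bounded (range g)"
     "\<forall>\<mu>\<in>prob_measures. (\<forall>g\<in>Fs. \<bar>(\<integral>y. g y \<partial>\<mu>) - (\<integral>y. g y \<partial>\<mu>F)\<bar> < \<eta>) \<longrightarrow> \<mu> \<in> mball \<mu>F \<epsilon>"
    by (rule nbhd_propD)
  then show ?thesis using that[of Fs \<eta>] by (auto simp: commute)
qed

lemma cont_one_g:
  fixes lam :: "'a measure" and xF :: "'a \<Rightarrow> 'm::{metric_space, second_countable_topology}"
    and h :: "'m \<Rightarrow> 'n::topological_space" and g :: "'n \<Rightarrow> real"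
  assumes P: "prob_space lam" and xFm: "xF \<in> borel_measurable lam" and V: "finite (xF ` space lam)"
    and h: "continuous_on UNIV h" and g: "continuous_on UNIV g" "bounded (range g)" and \<eta>: "\<eta> > 0"
  obtains \<delta> where "\<delta> > 0" "\<And>xT. xT \<in> borel_measurable lam \<Longrightarrow> dF lam xT xF < \<delta> \<Longrightarrow>
      \<bar>(\<integral>\<beta>. g (h (xT \<beta>)) \<partial>lam) - (\<integral>\<beta>. g (h (xF \<beta>)) \<partial>lam)\<bar> < \<eta>"
proof -
  interpret prob_space lam by (rule P)
  have "continuous_on (range h) g" using continuous_on_subset[OF g(1)] by simp
  then have gh: "continuous_on UNIV (g \<circ> h)" by (rule continuous_on_compose[OF h])
  have "\<forall>v\<in>xF ` space lam. \<exists>r>0. \<forall>m. dist m v < r \<longrightarrow> \<bar>g (h m) - g (h v)\<bar> < \<eta>/2"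
  proof
    fix v
    have "isCont (g \<circ> h) v" using gh continuous_on_eq_continuous_at by blast
    then obtain r where "r > 0" "\<forall>m. dist m v < r \<longrightarrow> dist ((g\<circ>h) m) ((g\<circ>h) v) < \<eta>/2"
      using \<eta> unfolding continuous_at_eps_delta by (meson half_gt_zero)
    then show "\<exists>r>0. \<forall>m. dist m v < r \<longrightarrow> \<bar>g (h m) - g (h v)\<bar> < \<eta>/2"
      by (auto simp: dist_real_def)
  qed
  then obtain r where r: "\<And>v. v \<in> xF ` space lam \<Longrightarrow> r v > 0"
     "\<And>v m. v \<in> xF ` space lam \<Longrightarrow> dist m v < r v \<Longrightarrow> \<bar>g (h m) - g (h v)\<bar> < \<eta>/2"
    by metis
  define r0 where "r0 = Min (insert 1 (r ` xF ` space lam))"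
  have r0pos: "r0 > 0" unfolding r0_def using V r(1) by (subst Min_gr_iff) auto
  have r0le: "\<And>v. v \<in> xF ` space lam \<Longrightarrow> r0 \<le> r v" unfolding r0_def using V by auto
  obtain B where B: "\<And>y. \<bar>g y\<bar> \<le> B" using g(2) unfolding bounded_iff by (auto simp: real_norm_def)
  have B0: "B \<ge> 0" using B[of undefined] by linarith
  define C where "C = 2 * B * (1 + r0) / r0"
  have C0: "C \<ge> 0" unfolding C_def using B0 r0pos by simp
  define \<delta> where "\<delta> = \<eta> / (2 * (C + 1))"
  have \<delta>: "\<delta> > 0" unfolding \<delta>_def using \<eta> C0 by simp
  show ?thesis
  proof (rule that[OF \<delta>])
    fix xT assume xT: "xT \<in> borel_measurable lam" and d: "dF lam xT xF < \<delta>"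
    define \<phi> where "\<phi> = (\<lambda>\<beta>. dist (xT \<beta>) (xF \<beta>) / (1 + dist (xT \<beta>) (xF \<beta>)))"
    have ghm: "g \<circ> h \<in> borel_measurable borel" using gh by (rule borel_measurable_continuous_onI)
    have m1: "(\<lambda>\<beta>. g (h (xT \<beta>))) \<in> borel_measurable lam"
      using measurable_compose[OF xT ghm] by (simp add: comp_def)
    have m2: "(\<lambda>\<beta>. g (h (xF \<beta>))) \<in> borel_measurable lam"
      using measurable_compose[OF xFm ghm] by (simp add: comp_def)
    have mphi: "\<phi> \<in> borel_measurable lam" unfolding \<phi>_def using xT xFm by measurable
    have i1: "integrable lam (\<lambda>\<beta>. g (h (xT \<beta>)))"
      by (rule integrable_const_bound[where B=B]) (use B m1 in auto)
    have i2: "integrable lam (\<lambda>\<beta>. g (h (xF \<beta>)))"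
      by (rule integrable_const_bound[where B=B]) (use B m2 in auto)
    have phi_b: "\<And>\<beta>. 0 \<le> \<phi> \<beta> \<and> \<phi> \<beta> \<le> 1" unfolding \<phi>_def
      by (simp add: divide_le_eq_1 add_pos_nonneg)
    have iphi: "integrable lam \<phi>"
      by (rule integrable_const_bound[where B=1]) (use phi_b mphi in auto)
    have pw: "\<bar>g (h (xT \<beta>)) - g (h (xF \<beta>))\<bar> \<le> \<eta>/2 + C * \<phi> \<beta>" if \<beta>: "\<beta> \<in> space lam" for \<beta>
    proof (cases "dist (xT \<beta>) (xF \<beta>) < r0")
      case True
      have "xF \<beta> \<in> xF ` space lam" using \<beta> by blast
      then have "\<bar>g (h (xT \<beta>)) - g (h (xF \<beta>))\<bar> < \<eta>/2" using r(2) r0le True by fastforce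
      moreover have "C * \<phi> \<beta> \<ge> 0" using C0 phi_b by simp
      ultimately show ?thesis by linarith
    next
      case False
      define t where "t = dist (xT \<beta>) (xF \<beta>)"
      have t: "t \<ge> r0" using False t_def by simp
      have "r0 / (1 + r0) \<le> t / (1 + t)" using t r0pos by (simp add: frac_le field_simps)
      then have "r0 / (1 + r0) \<le> \<phi> \<beta>" unfolding \<phi>_def t_def .
      then have "C * (r0 / (1 + r0)) \<le> C * \<phi> \<beta>" using C0 by (rule mult_left_mono)
      moreover have "C * (r0 / (1 + r0)) = 2 * B"
      proof -
        have "1 + r0 > 0" "r0 \<noteq> 0" "r0 + r0 * r0 \<noteq> 0" using r0pos by (auto simp: add_pos_pos) (metis add_pos_pos less_irrefl mult_pos_pos)
        then show ?thesis unfolding C_def by (simp add: field_simps)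
      qed
      moreover have "\<bar>g (h (xT \<beta>)) - g (h (xF \<beta>))\<bar> \<le> 2 * B" using B[of "h (xT \<beta>)"] B[of "h (xF \<beta>)"] by linarith
      ultimately show ?thesis using \<eta> by linarith
    qed
    have "\<bar>(\<integral>\<beta>. g (h (xT \<beta>)) \<partial>lam) - (\<integral>\<beta>. g (h (xF \<beta>)) \<partial>lam)\<bar>
        = \<bar>\<integral>\<beta>. g (h (xT \<beta>)) - g (h (xF \<beta>)) \<partial>lam\<bar>" using i1 i2 by simp
    also have "\<dots> \<le> (\<integral>\<beta>. \<bar>g (h (xT \<beta>)) - g (h (xF \<beta>))\<bar> \<partial>lam)" by (rule integral_abs_bound)
    also have "\<dots> \<le> (\<integral>\<beta>. \<eta>/2 + C * \<phi> \<beta> \<partial>lam)"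
      by (rule integral_mono) (use i1 i2 iphi pw in auto)
    also have "\<dots> = (\<integral>\<beta>. \<eta>/2 \<partial>lam) + (\<integral>\<beta>. C * \<phi> \<beta> \<partial>lam)"
      by (rule Bochner_Integration.integral_add) (use iphi in auto)
    also have "\<dots> = \<eta>/2 + C * (\<integral>\<beta>. \<phi> \<beta> \<partial>lam)" by (simp add: prob_space)
    also have "\<dots> = \<eta>/2 + C * dF lam xT xF" unfolding \<phi>_def dF_def ..
    also have "\<dots> < \<eta>"
    proof -
      have "C * dF lam xT xF \<le> C * \<delta>" using d C0 by (simp add: mult_left_mono)
      moreover have "C * \<delta> < \<eta>/2" unfolding \<delta>_def using \<eta> C0 by (simp add: field_simps)
      ultimately show ?thesis by linarith
    qed
    finally show "\<bar>(\<integral>\<beta>. g (h (xT \<beta>)) \<partial>lam) - (\<integral>\<beta>. g (h (xF \<beta>)) \<partial>lam)\<bar> < \<eta>" .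
  qed
qed

lemma tern_aux:
  fixes c :: "nat \<Rightarrow> real"
  assumes "\<And>n. \<bar>c n\<bar> \<le> 1" "\<bar>c 0\<bar> = 1"
  shows "(\<Sum>n. c n * (1/3)^n) \<noteq> 0"
proof -
  have sg: "summable (\<lambda>n. (1/3::real)^n)" by (rule summable_geometric) simp
  have sg1: "summable (\<lambda>n. (1/3::real)^(Suc n))" using sg by (simp add: summable_Suc_iff)
  have gs: "(\<Sum>n. (1/3::real)^(Suc n)) = 1/2"
  proof -
    have "(\<Sum>n. (1/3::real)^(Suc n)) = (\<Sum>n. (1/3) * (1/3::real)^n)" by simp
    also have "\<dots> = (1/3) * (\<Sum>n. (1/3::real)^n)" by (rule suminf_mult[OF sg])
    also have "\<dots> = 1/2" by (subst suminf_geometric) auto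
    finally show ?thesis .
  qed
  have sc: "summable (\<lambda>n. c n * (1/3)^n)"
    by (rule summable_comparison_test'[OF sg, of 0]) (use assms(1) in \<open>auto simp: abs_mult intro: mult_right_le_one_le\<close>)
  have sc1: "summable (\<lambda>n. c (Suc n) * (1/3)^(Suc n))" using sc by (subst summable_Suc_iff)
  have na: "summable (\<lambda>n. norm (c (Suc n) * (1/3)^(Suc n)))"
    by (rule summable_comparison_test'[OF sg1, of 0]) (use assms(1) in \<open>auto simp: abs_mult intro: mult_right_le_one_le\<close>)
  have "\<bar>\<Sum>n. c (Suc n) * (1/3)^(Suc n)\<bar> \<le> (\<Sum>n. norm (c (Suc n) * (1/3)^(Suc n)))"
    using summable_norm[OF na] by simp
  also have "\<dots> \<le> (\<Sum>n. (1/3::real)^(Suc n))"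
    by (rule suminf_le[OF _ na sg1]) (use assms(1) in \<open>auto simp: abs_mult intro: mult_right_le_one_le\<close>)
  finally have b: "\<bar>\<Sum>n. c (Suc n) * (1/3)^(Suc n)\<bar> \<le> 1/2" using gs by simp
  have "(\<Sum>n. c n * (1/3)^n) = c 0 + (\<Sum>n. c (Suc n) * (1/3)^(Suc n))"
    using suminf_split_head[OF sc] by simp
  then show ?thesis using b assms(2) by linarith
qed

lemma tern_inj:
  fixes a b :: "nat \<Rightarrow> real"
  assumes "\<And>n. a n \<in> {0,1}" "\<And>n. b n \<in> {0,1}" "a \<noteq> b"
  shows "(\<Sum>n. a n * (1/3)^n) \<noteq> (\<Sum>n. b n * (1/3)^n)"
proof -
  have sg: "summable (\<lambda>n. (1/3::real)^n)" by (rule summable_geometric) simp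
  have a1: "\<bar>a n\<bar> \<le> 1" for n using assms(1)[of n] by auto
  have b1: "\<bar>b n\<bar> \<le> 1" for n using assms(2)[of n] by auto
  have sa: "summable (\<lambda>n. a n * (1/3)^n)"
    by (rule summable_comparison_test'[OF sg, of 0]) (use a1 in \<open>auto simp: abs_mult intro: mult_right_le_one_le\<close>)
  have sb: "summable (\<lambda>n. b n * (1/3)^n)"
    by (rule summable_comparison_test'[OF sg, of 0]) (use b1 in \<open>auto simp: abs_mult intro: mult_right_le_one_le\<close>)
  define d where "d n = a n - b n" for n
  have d1: "\<bar>d n\<bar> \<le> 1" for n using assms(1)[of n] assms(2)[of n] unfolding d_def by auto
  obtain k where k: "a k \<noteq> b k" using assms(3) by blast
  define k0 where "k0 = (LEAST n. a n \<noteq> b n)"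
  have k0: "a k0 \<noteq> b k0" unfolding k0_def using k by (rule LeastI)
  have lt: "n < k0 \<Longrightarrow> d n = 0" for n unfolding d_def k0_def using not_less_Least by force
  have dk: "\<bar>d k0\<bar> = 1" using k0 assms(1)[of k0] assms(2)[of k0] unfolding d_def by auto
  have sd: "summable (\<lambda>n. d n * (1/3)^n)" unfolding d_def using summable_diff[OF sa sb] by (simp add: left_diff_distrib)
  have "(\<Sum>n. d n * (1/3)^n) = (\<Sum>n. d (n + k0) * (1/3)^(n + k0)) + (\<Sum>i<k0. d i * (1/3)^i)"
    by (rule suminf_split_initial_segment[OF sd])
  also have "(\<Sum>i<k0. d i * (1/3::real)^i) = 0" using lt by simp
  also have "(\<Sum>n. d (n + k0) * (1/3::real)^(n + k0)) = (1/3)^k0 * (\<Sum>n. d (n + k0) * (1/3)^n)"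
  proof -
    have s: "summable (\<lambda>n. d (n + k0) * (1/3::real)^n)"
      by (rule summable_comparison_test'[OF sg, of 0]) (use d1 in \<open>auto simp: abs_mult intro: mult_right_le_one_le\<close>)
    have "(\<Sum>n. d (n + k0) * (1/3::real)^(n + k0)) = (\<Sum>n. (1/3)^k0 * (d (n + k0) * (1/3::real)^n))"
      by (simp add: power_add mult_ac)
    also have "\<dots> = (1/3)^k0 * (\<Sum>n. d (n + k0) * (1/3)^n)" by (rule suminf_mult[OF s])
    finally show ?thesis .
  qed
  finally have eq: "(\<Sum>n. d n * (1/3)^n) = (1/3)^k0 * (\<Sum>n. d (n + k0) * (1/3)^n)" by simp
  have "(\<Sum>n. d (n + k0) * (1/3::real)^n) \<noteq> 0" by (rule tern_aux) (use d1 dk in auto)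
  then have "(\<Sum>n. d n * (1/3)^n) \<noteq> 0" using eq by simp
  moreover have "(\<Sum>n. d n * (1/3)^n) = (\<Sum>n. a n * (1/3)^n) - (\<Sum>n. b n * (1/3)^n)"
    unfolding d_def using suminf_diff[OF sa sb] by (simp add: left_diff_distrib)
  ultimately show ?thesis by simp
qed

lemma borel_injection:
  obtains \<psi> :: "'a::{second_countable_topology, t1_space} \<Rightarrow> real" where "inj \<psi>" "\<psi> \<in> borel_measurable borel"
proof -
  obtain B :: "'a set set" where B: "countable B" "topological_basis B" using ex_countable_basis by blast
  have Bne: "B \<noteq> {}"
  proof
    assume "B = {}"
    then have "open (UNIV::'a set) \<Longrightarrow> False" using B(2) unfolding topological_basis_def by auto
    then show False by simp
  qed
  define e where "e n = from_nat_into B n" for n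
  have eo: "open (e n)" for n unfolding e_def using from_nat_into[OF Bne] B(2) topological_basis_open by blast
  define \<psi> where "\<psi> x = (\<Sum>n. indicator (e n) x * (1/3::real)^n)" for x
  have "inj \<psi>"
  proof (rule injI, rule ccontr)
    fix x y assume eq: "\<psi> x = \<psi> y" and ne: "x \<noteq> y"
    obtain U where U: "open U" "x \<in> U" "y \<notin> U" using t1_space[OF ne] by blast
    obtain b where b: "b \<in> B" "x \<in> b" "b \<subseteq> U" using B(2) U(1,2) by (meson topological_basisE)
    obtain n where n: "e n = b" using from_nat_into_surj[OF B(1) b(1)] unfolding e_def by blast
    have "(\<lambda>n. indicator (e n) x) \<noteq> (\<lambda>n. indicator (e n) y :: real)"
    proof
      assume "(\<lambda>n. indicator (e n) x) = (\<lambda>n. indicator (e n) y :: real)"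
      then have "indicator (e n) x = (indicator (e n) y :: real)" by metis
      then show False using n b U by (auto simp: indicator_def)
    qed
    then have "\<psi> x \<noteq> \<psi> y" unfolding \<psi>_def by (intro tern_inj) (auto simp: indicator_def)
    then show False using eq by simp
  qed
  moreover have "\<psi> \<in> borel_measurable borel"
    unfolding \<psi>_def using eo by (intro borel_measurable_suminf) auto
  ultimately show ?thesis using that by blast
qed

lemma cdf_level:
  assumes "real_distribution \<nu>" "\<And>t. measure \<nu> {t} = 0" "0 \<le> s" "s \<le> 1"
  shows "measure \<nu> {t. cdf \<nu> t \<le> s} = s"
proof -
  interpret real_distribution \<nu> by fact
  define F where "F = cdf \<nu>"
  have Fc: "continuous_on UNIV F" unfolding F_def using isCont_cdf assms(2)
    by (simp add: continuous_at_imp_continuous_on)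
  have F01: "0 \<le> F t \<and> F t \<le> 1" for t unfolding F_def using cdf_nonneg cdf_bounded_prob by auto
  show ?thesis
  proof (cases "s = 1")
    case True
    then have "{t. cdf \<nu> t \<le> s} = space \<nu>" using F01 F_def by auto
    then show ?thesis using True prob_space by simp
  next
    case False
    then have s1: "s < 1" using assms by simp
    define T where "T = {t. F t \<le> s}"
    have ev1: "\<forall>\<^sub>F t in at_top. F t > s"
      using order_tendstoD(1)[OF cdf_lim_at_top_prob s1] unfolding F_def .
    then obtain M where M: "\<And>t. t \<ge> M \<Longrightarrow> F t > s" unfolding eventually_at_top_linorder by blast
    show ?thesis
    proof (cases "T = {}")
      case True
      have "s = 0"
      proof (rule ccontr)
        assume "s \<noteq> 0"
        then have "s > 0" using assms by simp
        then have "\<forall>\<^sub>F t in at_bot. F t < s"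
          using order_tendstoD(2)[OF cdf_lim_at_bot] unfolding F_def by blast
        then obtain M' where "\<And>t. t \<le> M' \<Longrightarrow> F t < s" unfolding eventually_at_bot_linorder by blast
        then have "M' \<in> T" unfolding T_def by (simp add: less_imp_le)
        then show False using True by simp
      qed
      moreover have "{t. cdf \<nu> t \<le> s} = {}" using True unfolding T_def F_def by simp
      ultimately show ?thesis by simp
    next
      case False
      have bdd: "bdd_above T"
      proof
        fix t assume "t \<in> T"
        then have "F t \<le> s" unfolding T_def by simp
        then show "t \<le> M" using M[of t] by force
      qed
      have cl: "closed T" unfolding T_def using Fc by (intro closed_Collect_le) (auto intro: continuous_intros)
      define ts where "ts = Sup T"
      have tsT: "ts \<in> T" unfolding ts_def using closed_contains_Sup[OF False bdd cl] .
      have Teq: "T = {..ts}"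
      proof
        show "T \<subseteq> {..ts}" unfolding ts_def using bdd by (auto intro: cSup_upper)
        show "{..ts} \<subseteq> T"
        proof
          fix t assume "t \<in> {..ts}"
          then have "F t \<le> F ts" unfolding F_def using cdf_nondecreasing by simp
          then show "t \<in> T" using tsT unfolding T_def by simp
        qed
      qed
      have "F ts = s"
      proof -
        define b where "b = max ts M"
        have "F ts \<le> s" using tsT T_def by simp
        moreover have "s \<le> F b" using M[of b] unfolding b_def by simp
        moreover have "ts \<le> b" unfolding b_def by simp
        ultimately obtain c where c: "ts \<le> c" "c \<le> b" "F c = s"
          using IVT'[of F ts s b] continuous_on_subset[OF Fc] by blast
        then have "c \<in> T" unfolding T_def by simp
        then have "c \<le> ts" using Teq by auto
        then show ?thesis using c by simp
      qed
      have "{t. cdf \<nu> t \<le> s} = {..ts}" using Teq unfolding T_def F_def .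
      then show ?thesis using \<open>F ts = s\<close> unfolding F_def cdf_def2 by simp
    qed
  qed
qed

lemma uniform_var:
  fixes lam :: "'a::euclidean_space measure"
  assumes P: "prob_space lam" and S: "sets lam = sets (restrict_space borel \<Omega>)"
    and at: "\<forall>\<beta>. emeasure lam {\<beta>} = 0"
  obtains U where "U \<in> borel_measurable lam" "\<And>\<beta>. 0 \<le> U \<beta> \<and> U \<beta> \<le> 1"
    "\<And>s. 0 \<le> s \<Longrightarrow> s \<le> 1 \<Longrightarrow> measure lam {\<beta>\<in>space lam. U \<beta> \<le> s} = s"
proof -
  interpret prob_space lam by (rule P)
  obtain \<psi> :: "'a \<Rightarrow> real" where inj: "inj \<psi>" and pm: "\<psi> \<in> borel_measurable borel" by (rule borel_injection)
  have psim: "\<psi> \<in> borel_measurable lam"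
    unfolding measurable_cong_sets[OF S refl] by (rule measurable_restrict_space1[OF pm])
  define \<nu> where "\<nu> = distr lam borel \<psi>"
  have rd: "real_distribution \<nu>" unfolding \<nu>_def using psim by simp
  have at\<nu>: "measure \<nu> {t} = 0" for t
  proof -
    have "measure \<nu> {t} = measure lam (\<psi> -` {t} \<inter> space lam)" unfolding \<nu>_def
      by (rule measure_distr[OF psim]) simp
    also have "\<dots> = 0"
    proof (cases "\<exists>x. \<psi> x = t")
      case True
      then obtain x where x: "\<psi> x = t" by blast
      then have "\<psi> -` {t} = {x}" using inj by (auto simp: inj_def)
      show ?thesis
      proof (cases "x \<in> space lam")
        case True
        then have "\<psi> -` {t} \<inter> space lam = {x}" using \<open>\<psi> -` {t} = {x}\<close> by auto
        then show ?thesis using at by (simp add: measure_def)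
      next
        case False
        then have "\<psi> -` {t} \<inter> space lam = {}" using \<open>\<psi> -` {t} = {x}\<close> by auto
        then show ?thesis by simp
      qed
    next
      case False
      then have "\<psi> -` {t} = {}" by auto
      then show ?thesis by simp
    qed
    finally show ?thesis .
  qed
  interpret rdi: real_distribution \<nu> by (rule rd)
  define U where "U \<beta> = cdf \<nu> (\<psi> \<beta>)" for \<beta>
  have Fc: "continuous_on UNIV (cdf \<nu>)" using rdi.isCont_cdf at\<nu>
    by (simp add: continuous_at_imp_continuous_on)
  have Fm: "cdf \<nu> \<in> borel_measurable borel" using Fc by (rule borel_measurable_continuous_onI)
  have Um: "U \<in> borel_measurable lam" unfolding U_def using measurable_compose[OF psim Fm] by (simp add: comp_def)
  have U01: "0 \<le> U \<beta> \<and> U \<beta> \<le> 1" for \<beta> unfolding U_def using rdi.cdf_nonneg rdi.cdf_bounded_prob by auto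
  have "measure lam {\<beta>\<in>space lam. U \<beta> \<le> s} = s" if s: "0 \<le> s" "s \<le> 1" for s
  proof -
    have cl: "closed {t. cdf \<nu> t \<le> s}" using Fc by (intro closed_Collect_le) (auto intro: continuous_intros)
    have mS: "{t. cdf \<nu> t \<le> s} \<in> sets borel" using cl by (rule borel_closed)
    have "measure (distr lam borel \<psi>) {t. cdf \<nu> t \<le> s} = measure lam (\<psi> -` {t. cdf \<nu> t \<le> s} \<inter> space lam)"
      by (rule measure_distr[OF psim mS])
    then have "measure \<nu> {t. cdf \<nu> t \<le> s} = measure lam (\<psi> -` {t. cdf \<nu> t \<le> s} \<inter> space lam)"
      unfolding \<nu>_def .
    moreover have "\<psi> -` {t. cdf \<nu> t \<le> s} \<inter> space lam = {\<beta>\<in>space lam. U \<beta> \<le> s}" unfolding U_def by auto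
    ultimately show ?thesis using cdf_level[OF rd at\<nu> s] by simp
  qed
  then show ?thesis using that Um U01 by blast
qed

lemma partition_real:
  fixes lam :: "'a measure" and U :: "'a \<Rightarrow> real" and p :: "nat \<Rightarrow> real"
  assumes P: "prob_space lam" and Um: "U \<in> borel_measurable lam" and U01: "\<And>\<beta>. 0 \<le> U \<beta> \<and> U \<beta> \<le> 1"
    and Us: "\<And>s. 0 \<le> s \<Longrightarrow> s \<le> 1 \<Longrightarrow> measure lam {\<beta>\<in>space lam. U \<beta> \<le> s} = s"
    and n: "n > 0" and p0: "\<And>j. p j \<ge> 0" and p1: "(\<Sum>j<n. p j) = 1"
  obtains J :: "'a \<Rightarrow> nat" where "J \<in> measurable lam (count_space UNIV)" "\<And>\<beta>. J \<beta> < n"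
    "\<And>j. j < n \<Longrightarrow> measure lam {\<beta>\<in>space lam. J \<beta> = j} = p j"
proof -
  interpret prob_space lam by (rule P)
  define S where "S j = (\<Sum>i<j. p i)" for j
  have Smono: "i \<le> j \<Longrightarrow> S i \<le> S j" for i j unfolding S_def using p0
    by (intro sum_mono2) auto
  have S0: "S 0 = 0" unfolding S_def by simp
  have Sn: "S n = 1" unfolding S_def using p1 .
  have S01: "j \<le> n \<Longrightarrow> 0 \<le> S j \<and> S j \<le> 1" for j using Smono[of 0 j] Smono[of j n] S0 Sn by simp
  have SSuc: "S (Suc j) = S j + p j" for j unfolding S_def by simp
  define J where "J \<beta> = (LEAST j. U \<beta> \<le> S (Suc j))" for \<beta>
  have ex: "U \<beta> \<le> S (Suc (n - 1))" for \<beta> using n Sn U01[of \<beta>] by simp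
  have Jlt: "J \<beta> < n" for \<beta>
  proof -
    have "J \<beta> \<le> n - 1" unfolding J_def by (rule Least_le) (rule ex)
    then show ?thesis using n by simp
  qed
  have Jle: "J \<beta> \<le> j \<longleftrightarrow> U \<beta> \<le> S (Suc j)" for \<beta> j
  proof
    assume "J \<beta> \<le> j"
    have "U \<beta> \<le> S (Suc (J \<beta>))" unfolding J_def by (rule LeastI) (rule ex)
    also have "\<dots> \<le> S (Suc j)" using \<open>J \<beta> \<le> j\<close> by (intro Smono) simp
    finally show "U \<beta> \<le> S (Suc j)" .
  next
    assume "U \<beta> \<le> S (Suc j)"
    then show "J \<beta> \<le> j" unfolding J_def by (rule Least_le)
  qed
  have setle: "{\<beta>\<in>space lam. J \<beta> \<le> j} = {\<beta>\<in>space lam. U \<beta> \<le> S (Suc j)}" for j using Jle by auto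
  have msle: "{\<beta>\<in>space lam. U \<beta> \<le> c} \<in> sets lam" for c using Um by measurable
  have measle: "j < n \<Longrightarrow> measure lam {\<beta>\<in>space lam. J \<beta> \<le> j} = S (Suc j)" for j
    unfolding setle using Us S01[of "Suc j"] by simp
  have seteq: "{\<beta>\<in>space lam. J \<beta> = j} \<in> sets lam \<and> (j < n \<longrightarrow> measure lam {\<beta>\<in>space lam. J \<beta> = j} = p j)" for j
  proof (cases j)
    case 0
    have e: "{\<beta>\<in>space lam. J \<beta> = j} = {\<beta>\<in>space lam. U \<beta> \<le> S (Suc 0)}" using 0 setle[of 0] by auto
    have "{\<beta>\<in>space lam. J \<beta> = j} \<in> sets lam" unfolding e by (rule msle)
    moreover have "j < n \<longrightarrow> measure lam {\<beta>\<in>space lam. J \<beta> = j} = p j"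
      using measle[of 0] setle[of 0] e S0 SSuc[of 0] 0 by simp
    ultimately show ?thesis by blast
  next
    case (Suc k)
    have "{\<beta>\<in>space lam. J \<beta> = j} = {\<beta>\<in>space lam. J \<beta> \<le> j} - {\<beta>\<in>space lam. J \<beta> \<le> k}" using Suc by auto
    moreover have "{\<beta>\<in>space lam. J \<beta> \<le> j} \<in> sets lam" "{\<beta>\<in>space lam. J \<beta> \<le> k} \<in> sets lam"
      using msle setle by auto
    moreover have "{\<beta>\<in>space lam. J \<beta> \<le> k} \<subseteq> {\<beta>\<in>space lam. J \<beta> \<le> j}" using Suc by auto
    ultimately have 1: "{\<beta>\<in>space lam. J \<beta> = j} \<in> sets lam"
       "measure lam {\<beta>\<in>space lam. J \<beta> = j} = measure lam {\<beta>\<in>space lam. J \<beta> \<le> j} - measure lam {\<beta>\<in>space lam. J \<beta> \<le> k}"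
      by (auto intro: finite_measure_Diff)
    show ?thesis
    proof (intro conjI impI)
      show "{\<beta>\<in>space lam. J \<beta> = j} \<in> sets lam" by (rule 1(1))
      assume "j < n"
      then show "measure lam {\<beta>\<in>space lam. J \<beta> = j} = p j"
        using 1(2) measle[of j] measle[of k] Suc SSuc[of "Suc k"] by simp
    qed
  qed
  have "J \<in> measurable lam (count_space UNIV)"
    unfolding measurable_count_space_eq2_countable
  proof (intro conjI ballI)
    show "J \<in> space lam \<rightarrow> UNIV" by simp
    fix a :: nat
    have "J -` {a} \<inter> space lam = {\<beta>\<in>space lam. J \<beta> = a}" by auto
    then show "J -` {a} \<inter> space lam \<in> sets lam" using seteq by simp
  qed
  then show ?thesis using that Jlt seteq by blast
qed

lemma int_simple:
  fixes M :: "'a measure" and c :: "'i \<Rightarrow> real"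
  assumes "prob_space M" "finite I" "\<And>i. i \<in> I \<Longrightarrow> A i \<in> sets M"
  shows "integrable M (\<lambda>x. \<Sum>i\<in>I. c i * indicator (A i) x)"
    "(\<integral>x. (\<Sum>i\<in>I. c i * indicator (A i) x) \<partial>M) = (\<Sum>i\<in>I. c i * measure M (A i))"
proof -
  interpret prob_space M by fact
  have ii: "integrable M (\<lambda>x. c i * indicator (A i) x)" if "i \<in> I" for i
    using assms(3)[OF that] by (intro integrable_mult_right integrable_real_indicator) (auto simp: less_top[symmetric])
  show "integrable M (\<lambda>x. \<Sum>i\<in>I. c i * indicator (A i) x)" by (rule Bochner_Integration.integrable_sum) (rule ii)
  have "(\<integral>x. (\<Sum>i\<in>I. c i * indicator (A i) x) \<partial>M) = (\<Sum>i\<in>I. (\<integral>x. c i * indicator (A i) x \<partial>M))"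
    by (rule Bochner_Integration.integral_sum) (rule ii)
  also have "\<dots> = (\<Sum>i\<in>I. c i * measure M (A i))"
  proof (rule sum.cong[OF refl])
    fix i assume "i \<in> I"
    then have "A i \<inter> space M = A i" using assms(3) sets.sets_into_space by blast
    then show "(\<integral>x. c i * indicator (A i) x \<partial>M) = c i * measure M (A i)" by simp
  qed
  finally show "(\<integral>x. (\<Sum>i\<in>I. c i * indicator (A i) x) \<partial>M) = (\<Sum>i\<in>I. c i * measure M (A i))" .
qed

lemma floor_bound:
  fixes x B \<tau> :: real
  assumes "\<bar>x\<bar> \<le> B" "\<tau> > 0"
  shows "- (\<lceil>B / \<tau>\<rceil> + 1) \<le> \<lfloor>x / \<tau>\<rfloor> \<and> \<lfloor>x / \<tau>\<rfloor> \<le> \<lceil>B / \<tau>\<rceil> + 1"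
proof -
  have "\<bar>x / \<tau>\<bar> \<le> B / \<tau>" using assms by (simp add: abs_divide divide_right_mono)
  moreover have "of_int \<lfloor>x / \<tau>\<rfloor> \<le> x / \<tau>" "x / \<tau> < of_int \<lfloor>x / \<tau>\<rfloor> + 1" by linarith+
  moreover have "B / \<tau> \<le> of_int \<lceil>B / \<tau>\<rceil>" by linarith
  ultimately have "- (of_int \<lceil>B / \<tau>\<rceil> + 1) \<le> (of_int \<lfloor>x / \<tau>\<rfloor> :: real) \<and> (of_int \<lfloor>x / \<tau>\<rfloor> :: real) \<le> of_int \<lceil>B / \<tau>\<rceil> + 1"
    by linarith
  then show ?thesis by linarith
qed

lemma floor_close:
  fixes a b \<tau> :: real
  assumes "\<lfloor>a / \<tau>\<rfloor> = \<lfloor>b / \<tau>\<rfloor>" "\<tau> > 0"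
  shows "\<bar>a - b\<bar> \<le> \<tau>"
proof -
  have "\<bar>a / \<tau> - b / \<tau>\<bar> < 1" using assms(1) by linarith
  then have "\<bar>(a - b) / \<tau>\<bar> < 1" by (simp add: diff_divide_distrib)
  then have "\<bar>a - b\<bar> / \<tau> < 1" using assms(2) by (simp add: abs_divide)
  then show ?thesis using assms(2) by (simp add: divide_less_eq)
qed

lemma realize:
  fixes lam :: "'a::euclidean_space measure" and h :: "'m::topological_space \<Rightarrow> 'n::topological_space"
    and \<mu>F :: "'n measure" and Fs :: "('n \<Rightarrow> real) set"
  assumes P: "prob_space lam" and S: "sets lam = sets (restrict_space borel \<Omega>)"
    and at: "\<forall>\<beta>. emeasure lam {\<beta>} = 0" and hs: "surj h" and mu: "\<mu>F \<in> prob_measures"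
    and fin: "finite Fs" and gb: "\<And>g. g \<in> Fs \<Longrightarrow> bounded (range g) \<and> g \<in> borel_measurable borel"
    and \<tau>: "\<tau> > 0"
  obtains xF where "xF \<in> borel_measurable lam" "finite (xF ` space lam)"
    "\<And>g. g \<in> Fs \<Longrightarrow> \<bar>(\<integral>\<beta>. g (h (xF \<beta>)) \<partial>lam) - (\<integral>y. g y \<partial>\<mu>F)\<bar> \<le> \<tau>"
proof -
  interpret prob_space lam by (rule P)
  interpret mF: prob_space \<mu>F using mu unfolding prob_measures_def by simp
  have sF: "sets \<mu>F = sets borel" using mu unfolding prob_measures_def by simp
  have spF: "space \<mu>F = UNIV" using sets_eq_imp_space_eq[OF sF] by simp
  have "\<forall>g\<in>Fs. \<exists>B. \<forall>y. \<bar>g y\<bar> \<le> B"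
  proof
    fix g assume "g \<in> Fs"
    then have "bounded (range g)" using gb by simp
    then show "\<exists>B. \<forall>y. \<bar>g y\<bar> \<le> B" unfolding bounded_iff by (auto simp: real_norm_def)
  qed
  then have "\<exists>Bd. \<forall>g\<in>Fs. \<forall>y. \<bar>g y\<bar> \<le> Bd g" by (rule bchoice)
  then obtain Bd where Bd: "\<And>g y. g \<in> Fs \<Longrightarrow> \<bar>g y\<bar> \<le> Bd g" by blast
  define \<kappa> where "\<kappa> y = restrict (\<lambda>g. \<lfloor>g y / \<tau>\<rfloor>) Fs" for y
  define K where "K = range \<kappa>"
  have kP: "\<kappa> y \<in> PiE Fs (\<lambda>g. {- (\<lceil>Bd g / \<tau>\<rceil> + 1) .. \<lceil>Bd g / \<tau>\<rceil> + 1})" for y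
    unfolding \<kappa>_def restrict_PiE_iff
  proof
    fix g assume "g \<in> Fs"
    from floor_bound[OF Bd[OF this] \<tau>] show "\<lfloor>g y / \<tau>\<rfloor> \<in> {- (\<lceil>Bd g / \<tau>\<rceil> + 1) .. \<lceil>Bd g / \<tau>\<rceil> + 1}" by simp
  qed
  have "K \<subseteq> PiE Fs (\<lambda>g. {- (\<lceil>Bd g / \<tau>\<rceil> + 1) .. \<lceil>Bd g / \<tau>\<rceil> + 1})"
    unfolding K_def using kP by blast
  moreover have "finite (PiE Fs (\<lambda>g. {- (\<lceil>Bd g / \<tau>\<rceil> + 1) .. \<lceil>Bd g / \<tau>\<rceil> + 1}))"
    by (rule finite_PiE[OF fin]) simp
  ultimately have finK: "finite K" by (rule finite_subset)
  have Kne: "K \<noteq> {}" unfolding K_def by simp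
  define n where "n = card K"
  have n: "n > 0" unfolding n_def using finK Kne by (simp add: card_gt_0_iff)
  obtain e where e: "bij_betw e {0..<n} K" unfolding n_def using ex_bij_betw_nat_finite[OF finK] by blast
  have eK: "j < n \<Longrightarrow> e j \<in> K" for j using e by (auto simp: bij_betw_def)
  have einj: "i < n \<Longrightarrow> j < n \<Longrightarrow> e i = e j \<Longrightarrow> i = j" for i j using e by (auto simp: bij_betw_def inj_on_def)
  define A where "A c = \<kappa> -` {c}" for c
  have kap_eq: "\<kappa> y = \<kappa> y' \<longleftrightarrow> (\<forall>g\<in>Fs. \<lfloor>g y / \<tau>\<rfloor> = \<lfloor>g y' / \<tau>\<rfloor>)" for y y'
  proof
    assume eq: "\<kappa> y = \<kappa> y'"
    show "\<forall>g\<in>Fs. \<lfloor>g y / \<tau>\<rfloor> = \<lfloor>g y' / \<tau>\<rfloor>"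
    proof
      fix g assume "g \<in> Fs"
      have "\<kappa> y g = \<kappa> y' g" using eq by simp
      then show "\<lfloor>g y / \<tau>\<rfloor> = \<lfloor>g y' / \<tau>\<rfloor>" using \<open>g \<in> Fs\<close> unfolding \<kappa>_def by simp
    qed
  next
    assume "\<forall>g\<in>Fs. \<lfloor>g y / \<tau>\<rfloor> = \<lfloor>g y' / \<tau>\<rfloor>"
    then show "\<kappa> y = \<kappa> y'" unfolding \<kappa>_def by (intro restrict_ext) simp
  qed
  have Aborel: "A c \<in> sets borel" if cK: "c \<in> K" for c
  proof -
    obtain y0 where c: "c = \<kappa> y0" using cK unfolding K_def by blast
    have "A c = {y\<in>space borel. \<forall>g\<in>Fs. \<lfloor>g y / \<tau>\<rfloor> = \<lfloor>g y0 / \<tau>\<rfloor>}" unfolding A_def c using kap_eq by auto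
    also have "\<dots> \<in> sets borel"
    proof (rule sets.sets_Collect_finite_All[OF _ fin])
      fix g assume g: "g \<in> Fs"
      then have [measurable]: "g \<in> borel_measurable borel" using gb by simp
      show "{y \<in> space borel. \<lfloor>g y / \<tau>\<rfloor> = \<lfloor>g y0 / \<tau>\<rfloor>} \<in> sets borel" by measurable
    qed
    finally show ?thesis .
  qed
  define yc where "yc c = (SOME y. \<kappa> y = c)" for c
  have yc: "c \<in> K \<Longrightarrow> \<kappa> (yc c) = c" for c unfolding yc_def K_def by (auto intro: someI)
  define m where "m c = (SOME x. h x = yc c)" for c
  have hm: "h (m c) = yc c" for c
  proof -
    have "\<exists>x. h x = yc c" using surjD[OF hs, of "yc c"] by (auto simp: eq_commute)
    then show ?thesis unfolding m_def by (rule someI_ex)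
  qed
  define p where "p j = measure \<mu>F (A (e j))" for j
  have p0: "p j \<ge> 0" for j unfolding p_def by simp
  have p1: "(\<Sum>j<n. p j) = 1"
  proof -
    have "(\<Sum>j<n. p j) = (\<Sum>c\<in>K. measure \<mu>F (A c))"
      unfolding p_def lessThan_atLeast0 by (rule sum.reindex_bij_betw[OF e])
    also have "\<dots> = measure \<mu>F (\<Union>c\<in>K. A c)"
    proof (rule measure_finite_Union[symmetric, OF finK])
      show "A ` K \<subseteq> sets \<mu>F" using Aborel sF by auto
      show "disjoint_family_on A K" unfolding disjoint_family_on_def A_def by auto
      show "\<And>i. i \<in> K \<Longrightarrow> emeasure \<mu>F (A i) \<noteq> \<infinity>" by simp
    qed
    also have "(\<Union>c\<in>K. A c) = space \<mu>F" unfolding spF A_def K_def by auto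
    finally show ?thesis using mF.prob_space by simp
  qed
  obtain U where Um: "U \<in> borel_measurable lam" and U01: "\<And>\<beta>. 0 \<le> U \<beta> \<and> U \<beta> \<le> 1"
    and Us: "\<And>s. 0 \<le> s \<Longrightarrow> s \<le> 1 \<Longrightarrow> measure lam {\<beta>\<in>space lam. U \<beta> \<le> s} = s"
    using uniform_var[OF P S at] by blast
  obtain J where Jm: "J \<in> measurable lam (count_space UNIV)" and Jlt: "\<And>\<beta>. J \<beta> < n"
    and Jmeas: "\<And>j. j < n \<Longrightarrow> measure lam {\<beta>\<in>space lam. J \<beta> = j} = p j"
    using partition_real[OF P Um U01 Us n p0 p1] by blast
  have Jsets: "{\<beta>\<in>space lam. J \<beta> = j} \<in> sets lam" for j
  proof -
    have "J -` {j} \<inter> space lam \<in> sets lam" using Jm by (rule measurable_sets) simp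
    moreover have "J -` {j} \<inter> space lam = {\<beta>\<in>space lam. J \<beta> = j}" by auto
    ultimately show ?thesis by simp
  qed
  define xF where "xF \<beta> = m (e (J \<beta>))" for \<beta>
  have xFm: "xF \<in> borel_measurable lam"
  proof -
    have "(\<lambda>j. m (e j)) \<in> measurable (count_space UNIV) borel" by simp
    from measurable_compose[OF Jm this] show ?thesis unfolding xF_def by simp
  qed
  have xFfin: "finite (xF ` space lam)"
  proof (rule finite_subset)
    show "xF ` space lam \<subseteq> (\<lambda>j. m (e j)) ` {..<n}" unfolding xF_def using Jlt by auto
  qed simp
  have main: "\<bar>(\<integral>\<beta>. g (h (xF \<beta>)) \<partial>lam) - (\<integral>y. g y \<partial>\<mu>F)\<bar> \<le> \<tau>" if g: "g \<in> Fs" for g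
  proof -
    have gm[measurable]: "g \<in> borel_measurable borel" and gbd: "\<And>y. \<bar>g y\<bar> \<le> Bd g" using gb g Bd by auto
    define v where "v j = g (yc (e j))" for j
    have pw1: "g (h (xF \<beta>)) = (\<Sum>j\<in>{..<n}. v j * indicator {\<beta>\<in>space lam. J \<beta> = j} \<beta>)"
      if "\<beta> \<in> space lam" for \<beta>
    proof -
      have "(\<Sum>j\<in>{..<n}. v j * indicator {\<beta>\<in>space lam. J \<beta> = j} \<beta>) = (\<Sum>j\<in>{..<n}. if J \<beta> = j then v j else 0)"
        using that by (intro sum.cong) (auto simp: indicator_def)
      also have "\<dots> = v (J \<beta>)" using Jlt[of \<beta>] by (simp add: sum.delta)
      finally show ?thesis unfolding v_def xF_def hm by simp
    qed
    have I1: "(\<integral>\<beta>. g (h (xF \<beta>)) \<partial>lam) = (\<Sum>j\<in>{..<n}. v j * p j)"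
    proof -
      have "(\<integral>\<beta>. g (h (xF \<beta>)) \<partial>lam) = (\<integral>\<beta>. (\<Sum>j\<in>{..<n}. v j * indicator {\<beta>\<in>space lam. J \<beta> = j} \<beta>) \<partial>lam)"
        using pw1 by (intro Bochner_Integration.integral_cong) auto
      also have "\<dots> = (\<Sum>j\<in>{..<n}. v j * measure lam {\<beta>\<in>space lam. J \<beta> = j})"
        by (rule int_simple(2)[OF P]) (use Jsets in auto)
      also have "\<dots> = (\<Sum>j\<in>{..<n}. v j * p j)" using Jmeas by (intro sum.cong) auto
      finally show ?thesis .
    qed
    define gh where "gh y = (\<Sum>j\<in>{..<n}. v j * indicator (A (e j)) y)" for y
    have ghint: "integrable \<mu>F gh" unfolding gh_def
      by (rule int_simple(1)[OF mF.prob_space_axioms]) (use Aborel eK sF in auto)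
    have I2: "(\<integral>y. gh y \<partial>\<mu>F) = (\<Sum>j\<in>{..<n}. v j * p j)" unfolding gh_def p_def
      by (rule int_simple(2)[OF mF.prob_space_axioms]) (use Aborel eK sF in auto)
    have pw2: "gh y = g (yc (\<kappa> y))" for y
    proof -
      have "gh y = (\<Sum>j\<in>{0..<n}. (\<lambda>c. if \<kappa> y = c then g (yc c) else 0) (e j))"
        unfolding gh_def v_def lessThan_atLeast0 by (intro sum.cong) (auto simp: indicator_def A_def)
      also have "\<dots> = (\<Sum>c\<in>K. if \<kappa> y = c then g (yc c) else 0)" by (rule sum.reindex_bij_betw[OF e])
      also have "\<dots> = g (yc (\<kappa> y))" using finK by (simp add: K_def)
      finally show ?thesis .
    qed
    have close: "\<bar>g y - gh y\<bar> \<le> \<tau>" for y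
    proof -
      have "\<kappa> (yc (\<kappa> y)) = \<kappa> y" by (rule yc) (simp add: K_def)
      then have "\<lfloor>g (yc (\<kappa> y)) / \<tau>\<rfloor> = \<lfloor>g y / \<tau>\<rfloor>" using kap_eq g by blast
      then have "\<bar>g y - g (yc (\<kappa> y))\<bar> \<le> \<tau>" by (rule floor_close[OF sym \<tau>])
      then show ?thesis using pw2 by simp
    qed
    have gmF: "g \<in> borel_measurable \<mu>F" unfolding measurable_cong_sets[OF sF refl] by (rule gm)
    have gint: "integrable \<mu>F g"
      by (rule mF.integrable_const_bound[where B="Bd g"]) (use gbd gmF in auto)
    have fin: "\<bar>(\<integral>y. g y \<partial>\<mu>F) - (\<integral>y. gh y \<partial>\<mu>F)\<bar> \<le> \<tau>"
    proof -
    have "\<bar>(\<integral>y. g y \<partial>\<mu>F) - (\<integral>y. gh y \<partial>\<mu>F)\<bar> = \<bar>\<integral>y. g y - gh y \<partial>\<mu>F\<bar>" using gint ghint by simp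
    also have "\<dots> \<le> (\<integral>y. \<bar>g y - gh y\<bar> \<partial>\<mu>F)" by (rule integral_abs_bound)
    also have "\<dots> \<le> (\<integral>y. \<tau> \<partial>\<mu>F)"
      by (rule integral_mono) (use gint ghint close in auto)
    also have "\<dots> = \<tau>" by (simp add: mF.prob_space)
    finally show ?thesis .
    qed
    have "(\<integral>\<beta>. g (h (xF \<beta>)) \<partial>lam) = (\<integral>y. gh y \<partial>\<mu>F)" using I1 I2 by simp
    then show ?thesis using fin abs_minus_commute[of "\<integral>y. g y \<partial>\<mu>F" "\<integral>y. gh y \<partial>\<mu>F"] by simp
  qed
  show ?thesis using that xFm xFfin main by blast
qed

theorem theorem1:
  fixes \<Omega> :: "'a::euclidean_space set"
    and lam :: "'a measure"
    and Sys :: "real \<Rightarrow> (real \<Rightarrow> 'p::euclidean_space) \<Rightarrow> ('a \<Rightarrow> 'm::{metric_space, second_countable_topology})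
                  \<Rightarrow> ('a \<Rightarrow> 'm) \<Rightarrow> bool"
    and h :: "'m \<Rightarrow> 'n::polish_space"
    and dP :: "'n measure \<Rightarrow> 'n measure \<Rightarrow> real"
  assumes "compact \<Omega>"
    and "prob_space lam"
    and "sets lam = sets (restrict_space borel \<Omega>)"
    and "\<forall>\<beta>. emeasure lam {\<beta>} = 0"
    and "\<And>T u x0 xT. Sys T u x0 xT \<Longrightarrow> x0 \<in> borel_measurable lam \<Longrightarrow> xT \<in> borel_measurable lam"
    and "metrizes_weak_topology dP"
    and "ensemble_controllable lam Sys"
    and "continuous_on UNIV h"
    and "surj h"
  shows "pattern_controllable lam Sys h dP"
proof -
  note P = assms(2) and S = assms(3) and at = assms(4) and sysm = assms(5) and met = assms(6)
    and ec = assms(7) and hc = assms(8) and hs = assms(9)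
  interpret prob_space lam by (rule P)
  have hm: "h \<in> borel_measurable borel" using hc by (rule borel_measurable_continuous_onI)
  show ?thesis unfolding pattern_controllable_def
  proof (intro ballI allI impI)
    fix x0 :: "'a \<Rightarrow> 'm" and \<mu>F :: "'n measure" and \<epsilon> :: real
    assume x0: "x0 \<in> borel_measurable lam" and mu: "\<mu>F \<in> prob_measures" and \<epsilon>: "\<epsilon> > 0"
    obtain Fs \<eta> where fin: "finite Fs" and \<eta>: "\<eta> > 0"
      and Fc: "\<forall>g\<in>Fs. continuous_on UNIV (g::'n\<Rightarrow>real) \<and> bounded (range g)"
      and nb: "\<forall>\<mu>\<in>prob_measures. (\<forall>g\<in>Fs. \<bar>(\<integral>y. g y \<partial>\<mu>) - (\<integral>y. g y \<partial>\<mu>F)\<bar> < \<eta>) \<longrightarrow> dP \<mu> \<mu>F < \<epsilon>"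
      using weak_nbhd[OF met mu \<epsilon>] by blast
    have gb: "bounded (range g) \<and> g \<in> borel_measurable borel" if "g \<in> Fs" for g
      using Fc that borel_measurable_continuous_onI by blast
    have \<eta>2: "\<eta>/2 > 0" using \<eta> by simp
    obtain xF where xFm: "xF \<in> borel_measurable lam" and xFfin: "finite (xF ` space lam)"
      and xFap: "\<And>g. g \<in> Fs \<Longrightarrow> \<bar>(\<integral>\<beta>. g (h (xF \<beta>)) \<partial>lam) - (\<integral>y. g y \<partial>\<mu>F)\<bar> \<le> \<eta>/2"
      using realize[OF P S at hs mu fin gb \<eta>2] by blast
    have "\<forall>g\<in>Fs. \<exists>\<delta>>0. \<forall>xT. xT \<in> borel_measurable lam \<longrightarrow> dF lam xT xF < \<delta> \<longrightarrow>
      \<bar>(\<integral>\<beta>. g (h (xT \<beta>)) \<partial>lam) - (\<integral>\<beta>. g (h (xF \<beta>)) \<partial>lam)\<bar> < \<eta>/2"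
    proof
      fix g assume g: "g \<in> Fs"
      obtain \<delta> where "\<delta> > 0" "\<And>xT. xT \<in> borel_measurable lam \<Longrightarrow> dF lam xT xF < \<delta> \<Longrightarrow>
      \<bar>(\<integral>\<beta>. g (h (xT \<beta>)) \<partial>lam) - (\<integral>\<beta>. g (h (xF \<beta>)) \<partial>lam)\<bar> < \<eta>/2"
        using cont_one_g[OF P xFm xFfin hc, of g "\<eta>/2"] Fc g \<eta>2 by blast
      then show "\<exists>\<delta>>0. \<forall>xT. xT \<in> borel_measurable lam \<longrightarrow> dF lam xT xF < \<delta> \<longrightarrow>
      \<bar>(\<integral>\<beta>. g (h (xT \<beta>)) \<partial>lam) - (\<integral>\<beta>. g (h (xF \<beta>)) \<partial>lam)\<bar> < \<eta>/2" by blast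
    qed
    then have "\<exists>\<delta>. \<forall>g\<in>Fs. \<delta> g > 0 \<and> (\<forall>xT. xT \<in> borel_measurable lam \<longrightarrow> dF lam xT xF < \<delta> g \<longrightarrow>
      \<bar>(\<integral>\<beta>. g (h (xT \<beta>)) \<partial>lam) - (\<integral>\<beta>. g (h (xF \<beta>)) \<partial>lam)\<bar> < \<eta>/2)" by (rule bchoice)
    then obtain \<delta> where \<delta>: "\<And>g. g \<in> Fs \<Longrightarrow> \<delta> g > 0"
      and \<delta>c: "\<And>g xT. g \<in> Fs \<Longrightarrow> xT \<in> borel_measurable lam \<Longrightarrow> dF lam xT xF < \<delta> g \<Longrightarrow>
      \<bar>(\<integral>\<beta>. g (h (xT \<beta>)) \<partial>lam) - (\<integral>\<beta>. g (h (xF \<beta>)) \<partial>lam)\<bar> < \<eta>/2" by blast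
    define \<delta>0 where "\<delta>0 = Min (insert 1 (\<delta> ` Fs))"
    have \<delta>0: "\<delta>0 > 0" unfolding \<delta>0_def using fin \<delta> by (subst Min_gr_iff) auto
    have \<delta>0le: "g \<in> Fs \<Longrightarrow> \<delta>0 \<le> \<delta> g" for g unfolding \<delta>0_def using fin by auto
    obtain T u xT where T: "T > 0" and u: "u \<in> borel_measurable borel" and sys: "Sys T u x0 xT"
      and d: "dF lam xT xF < \<delta>0"
      using ec x0 xFm \<delta>0 unfolding ensemble_controllable_def by blast
    have xTm: "xT \<in> borel_measurable lam" using sysm[OF sys x0] .
    have hxTm: "h \<circ> xT \<in> borel_measurable lam" using measurable_compose[OF xTm hm] by (simp add: comp_def)
    define \<nu> where "\<nu> = distr lam borel (h \<circ> xT)"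
    have \<nu>P: "\<nu> \<in> prob_measures" unfolding prob_measures_def \<nu>_def
      using prob_space_distr[OF hxTm] by simp
    have "\<forall>g\<in>Fs. \<bar>(\<integral>y. g y \<partial>\<nu>) - (\<integral>y. g y \<partial>\<mu>F)\<bar> < \<eta>"
    proof
      fix g assume g: "g \<in> Fs"
      have gm: "g \<in> borel_measurable borel" using gb[OF g] by simp
      have "(\<integral>y. g y \<partial>\<nu>) = (\<integral>\<beta>. g ((h \<circ> xT) \<beta>) \<partial>lam)" unfolding \<nu>_def
        by (rule integral_distr[OF hxTm gm])
      then have e: "(\<integral>y. g y \<partial>\<nu>) = (\<integral>\<beta>. g (h (xT \<beta>)) \<partial>lam)" by simp
      have "dF lam xT xF < \<delta> g" using d \<delta>0le[OF g] by simp
      then have 1: "\<bar>(\<integral>\<beta>. g (h (xT \<beta>)) \<partial>lam) - (\<integral>\<beta>. g (h (xF \<beta>)) \<partial>lam)\<bar> < \<eta>/2"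
        by (rule \<delta>c[OF g xTm])
      have 2: "\<bar>(\<integral>\<beta>. g (h (xF \<beta>)) \<partial>lam) - (\<integral>y. g y \<partial>\<mu>F)\<bar> \<le> \<eta>/2" by (rule xFap[OF g])
      show "\<bar>(\<integral>y. g y \<partial>\<nu>) - (\<integral>y. g y \<partial>\<mu>F)\<bar> < \<eta>" unfolding e using 1 2 by linarith
    qed
    then have "dP \<nu> \<mu>F < \<epsilon>" using nb \<nu>P by blast
    then show "\<exists>T>0. \<exists>u\<in>borel_measurable borel. \<exists>xT. Sys T u x0 xT \<and> dP (distr lam borel (h \<circ> xT)) \<mu>F < \<epsilon>"
      using T u sys unfolding \<nu>_def by blast
  qed
qed

end
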